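(* The metric space $L_\infty$ satisfies $\operatorname{trasdim} L_\infty=\infty$.
   Context: Let $X=\bigsqcup_{i=1}^\infty\mathbb Z^i$ (disjoint union). For $a=(a_1,\dots,a_l)\in\mathbb Z^l$ and $b=(b_1,\dots,b_k)\in\mathbb Z^k$ with $l\le k$, let $a'=(a_1,\dots,a_l,0,\dots,0)\in\mathbb Z^k$, let $c=0$ if $l=k$ and $c=l+(l+1)+\dots+(k-1)$ if $l<k$, and set $d_\infty(a,b)=d_\infty(b,a)=\max\{d(a',b),c\}$, where $d$ is the sup-metric $d(x,y)=\max_j|x_j-y_j|$ on $\mathbb Z^k$. $L_\infty=(X,d_\infty)$. A family $\mathcal A$ of subsets is uniformly bounded if there is $C>0$ with $\operatorname{diam}A\le C$ for all $A\in\mathcal A$; it is $r$-disjoint if $d(A_1,A_2)\ge r$ for all distinct $A_1,A_2\in\mathcal A$. For a set $L$, $\mathrm{Fin}\,L$ is the collection of finite nonempty subsets of $L$. For $M\subset \mathrm{Fin}\,L$ and $\sigma\in\{\emptyset\}\cup\mathrm{Fin}\,L$, $M^\sigma=\{\tau\in\mathrm{Fin}\,L:\sigma\cup\tau\in M,\ \sigma\cap\tau=\emptyset\}$, and $M^a=M^{\{a\}}$. The ordinal $\operatorname{Ord}M$: $\operatorname{Ord}M=0$ iff $M=\emptyset$; $\operatorname{Ord}M\le\alpha$ iff $\operatorname{Ord}M^a<\alpha$ for every $a\in L$; $\operatorname{Ord}M=\alpha$ iff $\operatorname{Ord}M\le\alpha$ and not $\operatorname{Ord}M<\alpha$; $\operatorname{Ord}M=\infty$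 iff $\operatorname{Ord} M\le\alpha$ for no ordinal $\alpha$. For a metric space $(X,d)$, $A(X,d)$ is the set of $\sigma\in\mathrm{Fin}\,\mathbb N$ such that there do NOT exist uniformly bounded families $\mathcal V_i$, $i\in\sigma$, with $\bigcup_{i\in\sigma}\mathcal V_i$ covering $X$ and each $\mathcal V_i$ being $i$-disjoint. Define $\operatorname{trasdim}X=\operatorname{Ord}A(X,d)$, except $\operatorname{trasdim}X=-1$ iff $X$ is bounded. *)

theory Defs
  imports Main "HOL-Library.Extended_Real"
begin

text \<open>Points of X = disjoint union of Z^i (i \<ge> 1) are represented as nonempty
  integer lists; a list of length l is a point of Z^l.\<close>

definition Linf_carrier :: "int list set" where
  "Linf_carrier = {a. a \<noteq> []}"

definition sup_dist :: "int list \<Rightarrow> int list \<Rightarrow> real" where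
  "sup_dist x y = Max ((\<lambda>j. real_of_int \<bar>x ! j - y ! j\<bar>) ` {..<length y})"

definition dinf_aux :: "int list \<Rightarrow> int list \<Rightarrow> real" where
  "dinf_aux a b =
     (let l = length a; k = length b;
          a' = a @ replicate (k - l) 0;
          c = (if l = k then 0 else (\<Sum>i\<in>{l..<k}. i))
      in max (sup_dist a' b) (real c))"

definition dinf :: "int list \<Rightarrow> int list \<Rightarrow> real" where
  "dinf a b = (if length a \<le> length b then dinf_aux a b else dinf_aux b a)"

definition unif_bounded :: "('a \<Rightarrow> 'a \<Rightarrow> real) \<Rightarrow> 'a set set \<Rightarrow> bool" where
  "unif_bounded d V \<longleftrightarrow> (\<exists>C>0. \<forall>A\<in>V. \<forall>x\<in>A. \<forall>y\<in>A. d x y \<le> C)"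

definition r_disjoint :: "('a \<Rightarrow> 'a \<Rightarrow> real) \<Rightarrow> real \<Rightarrow> 'a set set \<Rightarrow> bool" where
  "r_disjoint d r V \<longleftrightarrow>
     (\<forall>A1\<in>V. \<forall>A2\<in>V. A1 \<noteq> A2 \<longrightarrow> (\<forall>x\<in>A1. \<forall>y\<in>A2. r \<le> d x y))"

definition bounded_space :: "'a set \<Rightarrow> ('a \<Rightarrow> 'a \<Rightarrow> real) \<Rightarrow> bool" where
  "bounded_space X d \<longleftrightarrow> (\<exists>C. \<forall>x\<in>X. \<forall>y\<in>X. d x y \<le> C)"

definition Fin :: "'l set \<Rightarrow> 'l set set" where
  "Fin L = {s. finite s \<and> s \<noteq> {} \<and> s \<subseteq> L}"

definition deriv :: "'l set \<Rightarrow> 'l set set \<Rightarrow> 'l set \<Rightarrow> 'l set set" where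
  "deriv L M \<sigma> = {\<tau> \<in> Fin L. \<sigma> \<union> \<tau> \<in> M \<and> \<sigma> \<inter> \<tau> = {}}"

text \<open>ord_le L M \<alpha> means Ord M \<le> \<alpha>, with ordinals represented by elements of
  an arbitrary well-ordered type: Ord M \<le> \<alpha> iff M = {} (Ord M = 0) or
  Ord M^a < \<alpha> (i.e. Ord M^a \<le> \<beta> for some \<beta> < \<alpha>) for every a \<in> L.\<close>
inductive ord_le :: "'l set \<Rightarrow> 'l set set \<Rightarrow> 'o::wellorder \<Rightarrow> bool" for L where
  ord_le_empty: "ord_le L {} \<alpha>"
| ord_le_step: "(\<forall>a\<in>L. \<exists>\<beta><\<alpha>. ord_le L (deriv L M {a}) \<beta>) \<Longrightarrow> ord_le L M \<alpha>"

text \<open>N is taken to be the positive naturals.\<close>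
definition posnat :: "nat set" where "posnat = {n. 1 \<le> n}"

definition A_set :: "'a set \<Rightarrow> ('a \<Rightarrow> 'a \<Rightarrow> real) \<Rightarrow> nat set set" where
  "A_set X d = {\<sigma> \<in> Fin posnat.
     \<not> (\<exists>V :: nat \<Rightarrow> 'a set set.
          (\<forall>i\<in>\<sigma>. V i \<subseteq> Pow X \<and> unif_bounded d (V i) \<and> r_disjoint d (real i) (V i))
          \<and> X \<subseteq> \<Union>(\<Union>i\<in>\<sigma>. V i))}"

text \<open>trasdim X = \<infinity>: X is unbounded (so trasdim \<noteq> -1) and Ord A(X,d) = \<infinity>,
  where the ordinals range over the well-ordered type 'o.\<close>
definition trasdim_infinite :: "'o::wellorder itself \<Rightarrow> 'a set \<Rightarrow> ('a \<Rightarrow> 'a \<Rightarrow> real) \<Rightarrow> bool" where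
  "trasdim_infinite _ X d \<longleftrightarrow>
     \<not> bounded_space X d \<and> (\<forall>(\<alpha>::'o). \<not> ord_le posnat (A_set X d) \<alpha>)"

end

theory Submission
  imports Defs "HOL-Analysis.Brouwer_Fixpoint"
begin

definition emb :: "nat \<Rightarrow> (nat \<Rightarrow> nat) \<Rightarrow> int list" where
  "emb n z = map (\<lambda>k. int (z k)) [0..<n]"

lemma dinf_emb:
  assumes "0 < n"
  shows "dinf (emb n z) (emb n z') = Max ((\<lambda>k. real_of_int \<bar>int (z k) - int (z' k)\<bar>) ` {..<n})"
proof -
  have m: "Max ((\<lambda>k. real_of_int \<bar>int (z k) - int (z' k)\<bar>) ` {..<n}) \<ge> 0"
  proof -
    have "real_of_int \<bar>int (z 0) - int (z' 0)\<bar> \<le> Max ((\<lambda>k. real_of_int \<bar>int (z k) - int (z' k)\<bar>) ` {..<n})"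
      using assms by (intro Max_ge) auto
    then show ?thesis by (smt (verit) abs_ge_zero of_int_nonneg)
  qed
  show ?thesis
    unfolding dinf_def dinf_aux_def sup_dist_def emb_def Let_def
    using m by simp
qed

lemma dinf_emb_ge:
  assumes "k < n"
  shows "real_of_int \<bar>int (z k) - int (z' k)\<bar> \<le> dinf (emb n z) (emb n z')"
  using assms by (subst dinf_emb) auto

lemma dinf_emb_le:
  assumes "0 < n" "\<forall>k<n. \<bar>int (z k) - int (z' k)\<bar> \<le> (c::int)"
  shows "dinf (emb n z) (emb n z') \<le> real_of_int c"
proof -
  have "\<forall>k<n. real_of_int \<bar>int (z k) - int (z' k)\<bar> \<le> real_of_int c"
    using assms(2) by (metis of_int_le_iff)
  moreover have "{..<n} \<noteq> {}" using assms(1) by auto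
  ultimately show ?thesis unfolding dinf_emb[OF assms(1)] by (subst Max_le_iff) auto
qed

lemma if01: "(if A then 0 else if B then 1 else if C then 0 else (1::nat)) = 0 \<or>
  (if A then 0 else if B then 1 else if C then 0 else (1::nat)) = 1" by simp
lemma ifA: "A \<Longrightarrow> (if A then 0 else if B then 1 else if C then 0 else (1::nat)) = 0" by simp
lemma ifC: "\<not>A \<Longrightarrow> \<not>B \<Longrightarrow> C \<Longrightarrow> (if A then 0 else if B then 1 else if C then 0 else (1::nat)) = 0" by simp
lemma ifB: "\<not>A \<Longrightarrow> B \<Longrightarrow> (if A then 0 else if B then 1 else if C then 0 else (1::nat)) = 1" by simp
lemma ifN: "\<not>A \<Longrightarrow> \<not>B \<Longrightarrow> \<not>C \<Longrightarrow> (if A then 0 else if B then 1 else if C then 0 else (1::nat)) = 1" by simp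

lemma key:
  assumes fin: "finite \<sigma>" and ne: "\<sigma> \<noteq> {}" and ge: "\<sigma> \<subseteq> {4..}"
  shows "\<sigma> \<in> A_set Linf_carrier dinf"
proof -
  have F: "\<sigma> \<in> Fin posnat" using fin ne ge by (auto simp: Fin_def posnat_def)
  have "\<not> (\<exists>V :: nat \<Rightarrow> int list set set.
          (\<forall>i\<in>\<sigma>. V i \<subseteq> Pow Linf_carrier \<and> unif_bounded dinf (V i) \<and> r_disjoint dinf (real i) (V i))
          \<and> Linf_carrier \<subseteq> \<Union>(\<Union>i\<in>\<sigma>. V i))"
  proof
    assume "\<exists>V :: nat \<Rightarrow> int list set set.
          (\<forall>i\<in>\<sigma>. V i \<subseteq> Pow Linf_carrier \<and> unif_bounded dinf (V i) \<and> r_disjoint dinf (real i) (V i))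
          \<and> Linf_carrier \<subseteq> \<Union>(\<Union>i\<in>\<sigma>. V i)"
    then obtain V :: "nat \<Rightarrow> int list set set" where
      hV0: "(\<forall>i\<in>\<sigma>. V i \<subseteq> Pow Linf_carrier \<and> unif_bounded dinf (V i) \<and> r_disjoint dinf (real i) (V i))
      \<and> Linf_carrier \<subseteq> \<Union>(\<Union>i\<in>\<sigma>. V i)" ..
    have hV: "\<forall>i\<in>\<sigma>. V i \<subseteq> Pow Linf_carrier \<and> unif_bounded dinf (V i) \<and> r_disjoint dinf (real i) (V i)"
      using hV0 by (rule conjunct1)
    have cov: "Linf_carrier \<subseteq> \<Union>(\<Union>i\<in>\<sigma>. V i)" using hV0 by (rule conjunct2)
    define n where "n = card \<sigma>"
    have n0: "0 < n" using fin ne n_def by (simp add: card_gt_0_iff)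
    obtain e where e: "bij_betw e {0..<n} \<sigma>" using ex_bij_betw_nat_finite[OF fin] n_def by blast
    have ej: "e j \<in> \<sigma>" if "j < n" for j using e that by (auto simp: bij_betw_def)
    have "\<forall>i\<in>\<sigma>. \<exists>C>0. \<forall>A\<in>V i. \<forall>x\<in>A. \<forall>y\<in>A. dinf x y \<le> C"
      using hV by (auto simp: unif_bounded_def)
    then obtain Cf where Cf: "\<forall>i\<in>\<sigma>. Cf i > 0 \<and> (\<forall>A\<in>V i. \<forall>x\<in>A. \<forall>y\<in>A. dinf x y \<le> Cf i)"
      by metis
    define C where "C = Max (Cf ` \<sigma>)"
    have CC: "Cf i \<le> C" if "i \<in> \<sigma>" for i using fin that unfolding C_def by (intro Max_ge) auto
    define p :: nat where "p = nat \<lceil>C\<rceil> + 3"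
    define near where "near x B \<longleftrightarrow> (\<exists>z. emb n z \<in> B \<and> (\<forall>k<n. \<bar>int (x k) - int (z k)\<bar> \<le> 1))"
      for x :: "nat \<Rightarrow> nat" and B
    have Sep: "B = B'" if H: "j < n" "B \<in> V (e j)" "B' \<in> V (e j)" "near x B" "near x' B'"
      "\<forall>k<n. \<bar>int (x k) - int (x' k)\<bar> \<le> 1" for j B B' x x'
    proof (rule ccontr)
      assume nB: "B \<noteq> B'"
      obtain z where z: "emb n z \<in> B" "\<forall>k<n. \<bar>int (x k) - int (z k)\<bar> \<le> 1" using H(4) near_def by blast
      obtain z' where z': "emb n z' \<in> B'" "\<forall>k<n. \<bar>int (x' k) - int (z' k)\<bar> \<le> 1" using H(5) near_def by blast
      have "\<forall>k<n. \<bar>int (z k) - int (z' k)\<bar> \<le> 3"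
        using z(2) z'(2) H(6) by fastforce
      then have d3: "dinf (emb n z) (emb n z') \<le> 3" using dinf_emb_le[OF n0, of z z' 3] by simp
      have "r_disjoint dinf (real (e j)) (V (e j))" using hV ej[OF H(1)] by blast
      then have "real (e j) \<le> dinf (emb n z) (emb n z')"
        unfolding r_disjoint_def using H(2,3) nB z(1) z'(1) by blast
      moreover have "e j \<ge> 4" using ej[OF H(1)] ge by auto
      ultimately show False using d3 by linarith
    qed
    have Face: False if H: "j < n" "B \<in> V (e j)" "near x B" "x j = p" "near y B" "y j = 0" for j B x y
    proof -
      obtain z where z: "emb n z \<in> B" "\<forall>k<n. \<bar>int (x k) - int (z k)\<bar> \<le> 1" using H(3) near_def by blast
      obtain z' where z': "emb n z' \<in> B" "\<forall>k<n. \<bar>int (y k) - int (z' k)\<bar> \<le> 1" using H(5) near_def by blast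
      have "dinf (emb n z) (emb n z') \<le> Cf (e j)" using Cf ej[OF H(1)] H(2) z(1) z'(1) by blast
      also have "\<dots> \<le> C" using CC ej[OF H(1)] by blast
      finally have d1: "dinf (emb n z) (emb n z') \<le> C" .
      have "\<bar>int (z j) - int (z' j)\<bar> \<ge> int p - 2" using z(2) z'(2) H(1,4,6) by fastforce
      then have "real_of_int \<bar>int (z j) - int (z' j)\<bar> \<ge> real p - 2" by linarith
      moreover have "real p - 2 > C" unfolding p_def by linarith
      ultimately show False using dinf_emb_ge[OF H(1), of z z'] d1 by linarith
    qed
    define label where "label = (\<lambda>x j. if \<exists>B\<in>V (e j). near x B \<and> (\<exists>y. y j = 0 \<and> near y B) then 0
        else if \<exists>B\<in>V (e j). near x B then 1 else if 2 * x j < p then 0 else (1::nat))"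
    have lbl: "label x j = (if \<exists>y. y j = 0 \<and> near y W then 0 else 1)"
      if "j < n" "W \<in> V (e j)" "near x W" for x j W
    proof -
      have U: "B = W" if "B \<in> V (e j)" "near x B" for B
        using Sep[of j B W x x] that \<open>j < n\<close> \<open>W \<in> V (e j)\<close> \<open>near x W\<close> by simp
      have c1: "(\<exists>B\<in>V (e j). near x B \<and> (\<exists>y. y j = 0 \<and> near y B)) = (\<exists>y. y j = 0 \<and> near y W)"
        using U that(2,3) by blast
      have c2: "\<exists>B\<in>V (e j). near x B" using that by blast
      show ?thesis unfolding label_def by (simp only: c1 c2 if_True)
    qed
    have p0: "0 < p" unfolding p_def by simp
    obtain q where q1: "\<forall>i<n. q i < p"
      and q2: "\<forall>i<n. \<exists>r s. (\<forall>j<n. q j \<le> r j \<and> r j \<le> q j + 1) \<and> (\<forall>j<n. q j \<le> s j \<and> s j \<le> q j + 1) \<and> label r i \<noteq> label s i"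
    proof (rule kuhn_lemma[of p n label])
      show "0 < p" by (rule p0)
      show "\<forall>x. (\<forall>i<n. x i \<le> p) \<longrightarrow> (\<forall>i<n. label x i = 0 \<or> label x i = 1)"
        unfolding label_def using if01 by blast
      show "\<forall>x. (\<forall>i<n. x i \<le> p) \<longrightarrow> (\<forall>i<n. x i = 0 \<longrightarrow> label x i = 0)"
      proof (intro allI impI)
        fix x i assume "\<forall>i<n. x i \<le> p" "i < n" and x0: "x i = 0"
        show "label x i = 0"
        proof (cases "\<exists>B\<in>V (e i). near x B")
          case True
          then have "\<exists>B\<in>V (e i). near x B \<and> (\<exists>y. y i = 0 \<and> near y B)" using x0 by blast
          then show ?thesis unfolding label_def by (rule ifA)
        next
          case False
          then have nA: "\<not> (\<exists>B\<in>V (e i). near x B \<and> (\<exists>y. y i = 0 \<and> near y B))" by blast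
          have lt: "2 * x i < p" using x0 p0 by simp
          show ?thesis unfolding label_def using nA False lt by (rule ifC)
        qed
      qed
      show "\<forall>x. (\<forall>i<n. x i \<le> p) \<longrightarrow> (\<forall>i<n. x i = p \<longrightarrow> label x i = 1)"
      proof (intro allI impI)
        fix x i assume "\<forall>i<n. x i \<le> p" "i < n" and xp: "x i = p"
        have nA: "\<not> (\<exists>B\<in>V (e i). near x B \<and> (\<exists>y. y i = 0 \<and> near y B))"
          using Face[of i _ x] \<open>i < n\<close> xp by blast
        show "label x i = 1"
        proof (cases "\<exists>B\<in>V (e i). near x B")
          case True
          show ?thesis unfolding label_def using nA True by (rule ifB)
        next
          case False
          have lt: "\<not> 2 * x i < p" using xp by simp
          show ?thesis unfolding label_def using nA False lt by (rule ifN)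
        qed
      qed
    qed
    have "emb n q \<in> Linf_carrier" using n0 by (auto simp: Linf_carrier_def emb_def)
    then obtain i W where iW: "i \<in> \<sigma>" "W \<in> V i" "emb n q \<in> W" using cov by blast
    obtain j where j: "j < n" "e j = i" using e iW(1) by (auto simp: bij_betw_def)
    obtain r s where rs: "\<forall>k<n. q k \<le> r k \<and> r k \<le> q k + 1" "\<forall>k<n. q k \<le> s k \<and> s k \<le> q k + 1"
      "label r j \<noteq> label s j" using q2 j(1) by blast
    have nr: "near r W" unfolding near_def using iW(3) rs(1) by force
    have ns: "near s W" unfolding near_def using iW(3) rs(2) by force
    show False using lbl[OF j(1) _ nr] lbl[OF j(1) _ ns] iW(2) j(2) rs(3) by simp
  qed
  then show ?thesis using F unfolding A_set_def by blast
qed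

lemma deriv_deriv:
  assumes "a \<in> posnat" "a \<notin> \<sigma>"
  shows "Defs.deriv posnat (Defs.deriv posnat M \<sigma>) {a} = Defs.deriv posnat M (\<sigma> \<union> {a})"
  using assms unfolding Defs.deriv_def Fin_def
  by (auto simp: Un_assoc insert_commute)

lemma fresh:
  assumes "finite \<sigma>"
  shows "Max (insert 3 \<sigma>) + 1 \<notin> \<sigma>" "Max (insert 3 \<sigma>) + 1 \<ge> (4::nat)"
proof -
  have "x \<le> Max (insert 3 \<sigma>)" if "x \<in> \<sigma>" for x using assms that by (intro Max_ge) auto
  then show "Max (insert 3 \<sigma>) + 1 \<notin> \<sigma>" by fastforce
  have "3 \<le> Max (insert 3 \<sigma>)" using assms by (intro Max_ge) auto
  then show "Max (insert 3 \<sigma>) + 1 \<ge> (4::nat)" by simp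
qed

lemma ord_le_F:
  assumes "ord_le posnat M \<alpha>"
  shows "\<forall>\<sigma>. finite \<sigma> \<longrightarrow> \<sigma> \<subseteq> {4..} \<longrightarrow> M \<noteq> Defs.deriv posnat (A_set Linf_carrier dinf) \<sigma>"
  using assms
proof induct
  case (ord_le_empty \<alpha>)
  show ?case
  proof (intro allI impI)
    fix \<sigma> :: "nat set" assume f: "finite \<sigma>" and s: "\<sigma> \<subseteq> {4..}"
    define m where "m = Max (insert 3 \<sigma>) + 1"
    have m1: "m \<notin> \<sigma>" "m \<ge> 4" using fresh[OF f] m_def by auto
    have "\<sigma> \<union> {m} \<in> A_set Linf_carrier dinf" using f s m1 by (intro key) auto
    moreover have "{m} \<in> Fin posnat" using m1 by (auto simp: Fin_def posnat_def)
    ultimately have "{m} \<in> Defs.deriv posnat (A_set Linf_carrier dinf) \<sigma>"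
      using m1 unfolding Defs.deriv_def by auto
    then show "{} \<noteq> Defs.deriv posnat (A_set Linf_carrier dinf) \<sigma>" by auto
  qed
next
  case (ord_le_step \<alpha> M)
  show ?case
  proof (intro allI impI notI)
    fix \<sigma> :: "nat set" assume f: "finite \<sigma>" and s: "\<sigma> \<subseteq> {4..}"
      and M: "M = Defs.deriv posnat (A_set Linf_carrier dinf) \<sigma>"
    define m where "m = Max (insert 3 \<sigma>) + 1"
    have m1: "m \<notin> \<sigma>" "m \<ge> 4" using fresh[OF f] m_def by auto
    have mp: "m \<in> posnat" using m1 by (auto simp: posnat_def)
    then obtain \<beta> where "\<forall>\<sigma>. finite \<sigma> \<longrightarrow> \<sigma> \<subseteq> {4..} \<longrightarrow>
        Defs.deriv posnat M {m} \<noteq> Defs.deriv posnat (A_set Linf_carrier dinf) \<sigma>"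
      using ord_le_step by blast
    then have "Defs.deriv posnat M {m} \<noteq> Defs.deriv posnat (A_set Linf_carrier dinf) (\<sigma> \<union> {m})"
      using f s m1 by auto
    moreover have "Defs.deriv posnat M {m} = Defs.deriv posnat (A_set Linf_carrier dinf) (\<sigma> \<union> {m})"
      unfolding M using mp m1(1) by (rule deriv_deriv)
    ultimately show False by blast
  qed
qed

theorem theorem3:
  shows "trasdim_infinite TYPE('o::wellorder) Linf_carrier dinf"
  unfolding trasdim_infinite_def
proof (intro conjI allI)
  show "\<not> bounded_space Linf_carrier dinf"
  proof
    assume "bounded_space Linf_carrier dinf"
    then obtain C where C: "\<forall>x\<in>Linf_carrier. \<forall>y\<in>Linf_carrier. dinf x y \<le> C"
      unfolding bounded_space_def by blast
    define N :: nat where "N = nat \<lceil>C\<rceil> + 1"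
    have e1: "emb 1 (\<lambda>_. 0) \<in> Linf_carrier" "emb 1 (\<lambda>_. N) \<in> Linf_carrier"
      by (auto simp: emb_def Linf_carrier_def)
    have "real_of_int \<bar>int 0 - int N\<bar> \<le> dinf (emb 1 (\<lambda>_. 0)) (emb 1 (\<lambda>_. N))"
      using dinf_emb_ge[of 0 1 "\<lambda>_. 0" "\<lambda>_. N"] by simp
    then have "real N \<le> C" using C e1 by fastforce
    moreover have "real N > C" unfolding N_def by linarith
    ultimately show False by simp
  qed
next
  fix \<alpha> :: 'o
  show "\<not> ord_le posnat (A_set Linf_carrier dinf) \<alpha>"
  proof
    assume "ord_le posnat (A_set Linf_carrier dinf) \<alpha>"
    moreover have "Defs.deriv posnat (A_set Linf_carrier dinf) {} = A_set Linf_carrier dinf"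
      unfolding Defs.deriv_def by (auto simp: A_set_def)
    ultimately show False using ord_le_F[of "A_set Linf_carrier dinf" \<alpha>] by auto
  qed
qed

end
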